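(* Assume $CA_2$. Then there is a first countable $S$-space, i.e. a first countable regular ($T_3$) topological space which is hereditarily separable and not Lindelöf.
   Context: A type is a sequence $\tau=\{(m_k,n_{k+1},r_{k+1})\}_{k\in\omega}$ of natural numbers with $m_0=1$; $n_k\ge2$ for $k\ge1$; every $r\in\omega$ equals $r_k$ for infinitely many $k$; $m_k>r_{k+1}$; and $m_{k+1}=r_{k+1}+(m_k-r_{k+1})n_{k+1}$ for all $k$. For a set of ordinals $X$ and $\mathcal F\subseteq[X]^{<\omega}$, $\mathcal F_k$ is the set of elements of rank $k$ in $(\mathcal F,\subsetneq)$; $A\sqsubseteq B$ means $A\subseteq B$ and every element of $B$ below an element of $A$ is in $A$; $A<B$ means every element of $A$ is below every element of $B$. $\mathcal F$ is a construction scheme over $X$ of type $\tau$ if (1) every finite subset of $X$ lies in a member of $\mathcal F$; (2) $|F|=m_k$ for $F\in\mathcal F_k$; (3) $E\cap F\sqsubseteq E,F$ for $E,F\in\mathcal F_k$; (4) each $F\in\mathcal F_{k+1}$ is the union of uniquely determined $F_0,\dots,F_{n_{k+1}-1}\in\mathcal F_k$ forming a $\Delta$-system with root $R(F)$, $|R(F)|=r_{k+1}$, $R(F)<F_0\setminus R(F)<\dots<F_{n_{k+1}-1}\setminus R(F)$. For a construction scheme $\mathcal F$ over $\omega_1$, $l\ge1$, $F\in\mathcal F_l$ and finite $\mathcal C\subseteq[\omega_1]^{<\omega}$: $F$ captures $\mathcal C$ if $|\mathcal C|\le n_l$ and $\mathcal C$ can be enumerated as $\{c_i\}_{i<|\mathcal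 C|}$ with $c_i\subseteq F_i$, $c_i\setminus R(F)\neq\emptyset$ and $\phi_i[c_0]=c_i$ where $\phi_i:F_0\to F_i$ is the increasing bijection. $\mathcal F$ is $n$-capturing if for every uncountable $S\subseteq[\omega_1]^{<\omega}$ and every $k\in\omega$ there are $\mathcal C\in[S]^n$, $l>k$ and $F\in\mathcal F_l$ capturing $\mathcal C$. $CA_n$ is the statement: for every type $\tau$ with $n\le n_k$ for all $k\ge1$ there is an $n$-capturing construction scheme over $\omega_1$ of type $\tau$. *)

theory Defs
  imports "HOL-Analysis.Analysis"
begin

text \<open>A well-ordered type whose universe is uncountable while all proper initial
segments are countable is order-isomorphic to omega_1.\<close>

definition omega1_type :: "'a::wellorder itself \<Rightarrow> bool" where
  "omega1_type _ \<longleftrightarrow> uncountable (UNIV :: 'a set) \<and> (\<forall>x::'a. countable {y. y < x})"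

text \<open>A type tau = (m_k, n_(k+1), r_(k+1))_k is given by three sequences m, n, r
(the values n 0 and r 0 are irrelevant).\<close>

definition is_type :: "(nat \<Rightarrow> nat) \<Rightarrow> (nat \<Rightarrow> nat) \<Rightarrow> (nat \<Rightarrow> nat) \<Rightarrow> bool" where
  "is_type m n r \<longleftrightarrow>
     m 0 = 1 \<and>
     (\<forall>k\<ge>1. n k \<ge> 2) \<and>
     (\<forall>x. infinite {k. k \<ge> 1 \<and> r k = x}) \<and>
     (\<forall>k. m k > r (Suc k)) \<and>
     (\<forall>k. m (Suc k) = r (Suc k) + (m k - r (Suc k)) * n (Suc k))"

text \<open>rank_ge F k A: A is in F and has rank at least k in the poset (F, proper subset),
i.e. there is a strictly decreasing chain of length k below A inside F.\<close>

fun rank_ge :: "'a set set \<Rightarrow> nat \<Rightarrow> 'a set \<Rightarrow> bool" where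
  "rank_ge \<F> 0 A = (A \<in> \<F>)"
| "rank_ge \<F> (Suc k) A = (A \<in> \<F> \<and> (\<exists>B. rank_ge \<F> k B \<and> B \<subset> A))"

definition level :: "'a set set \<Rightarrow> nat \<Rightarrow> 'a set set" where
  "level \<F> k = {A. rank_ge \<F> k A \<and> \<not> rank_ge \<F> (Suc k) A}"

definition init_seg :: "'a::linorder set \<Rightarrow> 'a set \<Rightarrow> bool" where
  "init_seg A B \<longleftrightarrow> A \<subseteq> B \<and> (\<forall>b\<in>B. \<forall>a\<in>A. b < a \<longrightarrow> b \<in> A)"

definition set_less :: "'a::linorder set \<Rightarrow> 'a set \<Rightarrow> bool" where
  "set_less A B \<longleftrightarrow> (\<forall>a\<in>A. \<forall>b\<in>B. a < b)"

text \<open>decomp F n r k A Fs: the list Fs = [F_0,...,F_(n_(k+1)-1)] of members of F of rank k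
witnesses clause (4) for A (of rank k+1).\<close>

definition decomp ::
  "'a::linorder set set \<Rightarrow> (nat \<Rightarrow> nat) \<Rightarrow> (nat \<Rightarrow> nat) \<Rightarrow> nat \<Rightarrow> 'a set \<Rightarrow> 'a set list \<Rightarrow> bool" where
  "decomp \<F> n r k A Fs \<longleftrightarrow>
     length Fs = n (Suc k) \<and>
     (\<forall>i<length Fs. Fs ! i \<in> level \<F> k) \<and>
     A = \<Union>(set Fs) \<and>
     (\<exists>R. card R = r (Suc k) \<and>
          (\<forall>i<length Fs. \<forall>j<length Fs. i \<noteq> j \<longrightarrow> Fs ! i \<inter> Fs ! j = R) \<and>
          set_less R (Fs ! 0 - R) \<and>
          (\<forall>i. Suc i < length Fs \<longrightarrow> set_less (Fs ! i - R) (Fs ! Suc i - R)))"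

definition construction_scheme ::
  "'a::linorder set \<Rightarrow> (nat \<Rightarrow> nat) \<Rightarrow> (nat \<Rightarrow> nat) \<Rightarrow> (nat \<Rightarrow> nat) \<Rightarrow> 'a set set \<Rightarrow> bool" where
  "construction_scheme X m n r \<F> \<longleftrightarrow>
     (\<forall>F\<in>\<F>. finite F \<and> F \<subseteq> X) \<and>
     (\<forall>A. finite A \<and> A \<subseteq> X \<longrightarrow> (\<exists>F\<in>\<F>. A \<subseteq> F)) \<and>
     (\<forall>k. \<forall>F\<in>level \<F> k. card F = m k) \<and>
     (\<forall>k. \<forall>E\<in>level \<F> k. \<forall>F\<in>level \<F> k. init_seg (E \<inter> F) E \<and> init_seg (E \<inter> F) F) \<and>
     (\<forall>k. \<forall>F\<in>level \<F> (Suc k). \<exists>!Fs. decomp \<F> n r k F Fs)"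

text \<open>The canonical blocks F_0,...,F_(n_l - 1) of F of rank l = Suc k, and its root.\<close>

definition blocks :: "'a::linorder set set \<Rightarrow> (nat \<Rightarrow> nat) \<Rightarrow> (nat \<Rightarrow> nat) \<Rightarrow> nat \<Rightarrow> 'a set \<Rightarrow> 'a set list" where
  "blocks \<F> n r k F = (THE Fs. decomp \<F> n r k F Fs)"

definition root :: "'a::linorder set set \<Rightarrow> (nat \<Rightarrow> nat) \<Rightarrow> (nat \<Rightarrow> nat) \<Rightarrow> nat \<Rightarrow> 'a set \<Rightarrow> 'a set" where
  "root \<F> n r k F = blocks \<F> n r k F ! 0 \<inter> blocks \<F> n r k F ! 1"

definition incr_bij :: "'a::linorder set \<Rightarrow> 'a set \<Rightarrow> 'a \<Rightarrow> 'a" where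
  "incr_bij A B x = sorted_list_of_set B ! card {y\<in>A. y < x}"

definition captures ::
  "'a::linorder set set \<Rightarrow> (nat \<Rightarrow> nat) \<Rightarrow> (nat \<Rightarrow> nat) \<Rightarrow> nat \<Rightarrow> 'a set \<Rightarrow> 'a set set \<Rightarrow> bool" where
  "captures \<F> n r l F \<C> \<longleftrightarrow>
     l \<ge> 1 \<and> F \<in> level \<F> l \<and> finite \<C> \<and> card \<C> \<le> n l \<and>
     (let Fs = blocks \<F> n r (l - 1) F; R = root \<F> n r (l - 1) F in
       \<exists>cs. distinct cs \<and> set cs = \<C> \<and>
         (\<forall>i<length cs. cs ! i \<subseteq> Fs ! i \<and> cs ! i - R \<noteq> {} \<and>
                        incr_bij (Fs ! 0) (Fs ! i) ` (cs ! 0) = cs ! i))"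

definition n_capturing ::
  "nat \<Rightarrow> (nat \<Rightarrow> nat) \<Rightarrow> (nat \<Rightarrow> nat) \<Rightarrow> 'a::linorder set set \<Rightarrow> bool" where
  "n_capturing p n r \<F> \<longleftrightarrow>
     (\<forall>S. S \<subseteq> {A. finite A} \<and> uncountable S \<longrightarrow>
        (\<forall>k. \<exists>\<C> l F. \<C> \<subseteq> S \<and> finite \<C> \<and> card \<C> = p \<and> l > k \<and> F \<in> level \<F> l \<and>
                     captures \<F> n r l F \<C>))"

text \<open>CA_p, with omega_1 represented by the well-ordered type 'a.\<close>

definition CA :: "'a::wellorder itself \<Rightarrow> nat \<Rightarrow> bool" where
  "CA _ p \<longleftrightarrow>
     (\<forall>m n r. is_type m n r \<and> (\<forall>k\<ge>1. p \<le> n k) \<longrightarrow>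
        (\<exists>\<F> :: 'a set set. construction_scheme UNIV m n r \<F> \<and> n_capturing p n r \<F>))"

end

theory Submission
  imports Defs
begin

locale nbhd =
  fixes rel :: "nat \<Rightarrow> 'a::wellorder \<Rightarrow> 'a \<Rightarrow> bool"
  assumes P1: "rel k x x"
    and P2: "rel k y x \<Longrightarrow> y \<le> x"
    and P3: "rel (Suc k) y x \<Longrightarrow> rel k y x"
    and P4: "y \<noteq> x \<Longrightarrow> \<exists>k. \<not> rel k y x"
    and P5: "rel k y x \<Longrightarrow> \<exists>j. \<forall>w. rel j w y \<longrightarrow> rel k w x"
    and P6: "\<not> rel k y x \<Longrightarrow> \<exists>j. \<forall>w. rel j w y \<longrightarrow> \<not> rel k w x"
    and P7: "uncountable Y \<Longrightarrow> \<exists>y z. y \<in> Y \<and> z \<in> Y \<and> y < z \<and> rel k y z"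
    and U1: "omega1_type TYPE('a)"
begin

definition N where "N k x = {y. rel k y x}"

lemma P3': "k \<le> j \<Longrightarrow> rel j y x \<Longrightarrow> rel k y x"
  by (induction j rule: dec_induct) (use P3 in blast)+

definition opn where "opn U \<longleftrightarrow> (\<forall>x\<in>U. \<exists>k. N k x \<subseteq> U)"

lemma istop: "istopology opn"
  unfolding istopology_def
proof (intro conjI allI impI)
  fix S T assume "opn S" "opn T"
  show "opn (S \<inter> T)" unfolding opn_def
  proof
    fix x assume x: "x \<in> S \<inter> T"
    then obtain k1 k2 where "N k1 x \<subseteq> S" "N k2 x \<subseteq> T" using \<open>opn S\<close> \<open>opn T\<close> unfolding opn_def by blast
    then have "N (max k1 k2) x \<subseteq> S \<inter> T" unfolding N_def using P3'[of k1 "max k1 k2"] P3'[of k2 "max k1 k2"] by auto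
    then show "\<exists>k. N k x \<subseteq> S \<inter> T" by blast
  qed
next
  fix K assume "\<forall>S\<in>K. opn S"
  then show "opn (\<Union>K)" unfolding opn_def
  proof (intro ballI)
    fix x assume "\<forall>S\<in>K. \<forall>x\<in>S. \<exists>k. N k x \<subseteq> S" "x \<in> \<Union>K"
    then obtain S where "S \<in> K" "x \<in> S" by blast
    then obtain k where "N k x \<subseteq> S" using \<open>\<forall>S\<in>K. \<forall>x\<in>S. \<exists>k. N k x \<subseteq> S\<close> by blast
    then show "\<exists>k. N k x \<subseteq> \<Union>K" using \<open>S \<in> K\<close> by blast
  qed
qed

definition X where "X = topology opn"

lemma openX: "openin X U \<longleftrightarrow> opn U" unfolding X_def using istop by simp

lemma topX: "topspace X = UNIV"
proof -
  have "openin X UNIV" unfolding openX opn_def by simp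
  then show ?thesis using openin_subset by blast
qed

lemma N_open: "openin X (N k x)"
  unfolding openX opn_def
proof
  fix y assume "y \<in> N k x"
  then obtain j where "\<forall>w. rel j w y \<longrightarrow> rel k w x" using P5 unfolding N_def by blast
  then show "\<exists>j. N j y \<subseteq> N k x" unfolding N_def by blast
qed

lemma N_closed: "openin X (- N k x)"
  unfolding openX opn_def
proof
  fix y assume "y \<in> - N k x"
  then obtain j where "\<forall>w. rel j w y \<longrightarrow> \<not> rel k w x" using P6 unfolding N_def by blast
  then show "\<exists>j. N j y \<subseteq> - N k x" unfolding N_def by blast
qed

lemma N_mem: "x \<in> N k x" unfolding N_def using P1 by simp

lemma fc: "first_countable X"
  unfolding first_countable_def
proof
  fix x assume "x \<in> topspace X"
  show "\<exists>B. countable B \<and> (\<forall>V\<in>B. openin X V) \<and> (\<forall>U. openin X U \<and> x \<in> U \<longrightarrow> (\<exists>V\<in>B. x \<in> V \<and> V \<subseteq> U))"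
    apply (rule exI[of _ "range (\<lambda>k. N k x)"])
    using N_open N_mem unfolding openX opn_def by auto
qed

lemma t1: "t1_space X"
  unfolding t1_space_def topX
proof (intro ballI impI)
  fix x y :: 'a assume "x \<noteq> y"
  show "\<exists>U. openin X U \<and> x \<in> U \<and> y \<notin> U"
  proof (cases "y < x")
    case True
    obtain k where "\<not> rel k y x" using P4 \<open>x \<noteq> y\<close> by metis
    then have "y \<notin> N k x" unfolding N_def by simp
    then show ?thesis using N_open[of k x] N_mem[of x k] by blast
  next
    case False
    then have "x < y" using \<open>x \<noteq> y\<close> by auto
    then have "y \<notin> N 0 x" unfolding N_def using P2 by fastforce
    then show ?thesis using N_open N_mem by blast
  qed
qed

lemma reg: "regular_space X"
  unfolding regular_space_def
proof (intro allI impI)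
  fix C a assume "closedin X C \<and> a \<in> topspace X - C"
  then have "openin X (- C)" "a \<in> - C" unfolding closedin_def topX by (auto simp: Compl_eq_Diff_UNIV)
  then obtain k where "N k a \<subseteq> - C" unfolding openX opn_def by blast
  then show "\<exists>U V. openin X U \<and> openin X V \<and> a \<in> U \<and> C \<subseteq> V \<and> disjnt U V"
    using N_open[of k a] N_closed[of k a] N_mem[of a k] unfolding disjnt_def
    by (intro exI[of _ "N k a"] exI[of _ "- N k a"]) auto
qed

lemma ctbl_le: "countable {y. y \<le> (c::'a)}"
proof -
  have "{y. y \<le> c} = {y. y < c} \<union> {c}" by auto
  then show ?thesis using U1 unfolding omega1_type_def by simp
qed

lemma notL: "\<not> Lindelof_space X"
proof
  assume L: "Lindelof_space X"
  have op: "\<forall>U\<in>range (\<lambda>x. N 0 x). openin X U" using N_open by blast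
  have cov: "\<Union>(range (\<lambda>x. N 0 x)) = topspace X" unfolding topX using N_mem by blast
  have imp: "(\<forall>U\<in>range (\<lambda>x. N 0 x). openin X U) \<and> \<Union>(range (\<lambda>x. N 0 x)) = topspace X \<longrightarrow>
     (\<exists>V. countable V \<and> V \<subseteq> range (\<lambda>x. N 0 x) \<and> \<Union>V = topspace X)"
    using L unfolding Lindelof_space_def by (rule spec)
  have "\<exists>V. countable V \<and> V \<subseteq> range (\<lambda>x. N 0 x) \<and> \<Union>V = topspace X"
    using imp conjI[OF op cov] by (rule mp)
  then obtain V where V: "countable V" "V \<subseteq> range (\<lambda>x. N 0 x)" "\<Union>V = topspace X" by (elim exE conjE)
  define f where "f = (\<lambda>v. SOME x. v = N 0 x)"
  have fv: "N 0 (f v) = v" if "v \<in> V" for v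
  proof -
    have "\<exists>x. v = N 0 x" using V(2) that by blast
    then have "v = N 0 (f v)" unfolding f_def by (rule someI_ex)
    then show ?thesis by (rule sym)
  qed
  have "UNIV \<subseteq> (\<Union>c\<in>f ` V. {y. y \<le> c})"
  proof
    fix y :: 'a
    have "y \<in> \<Union>V" using V(3) topX by auto
    then obtain v where "v \<in> V" "y \<in> v" by auto
    then have "y \<in> N 0 (f v)" using fv[of v] by auto
    then have "rel 0 y (f v)" unfolding N_def by simp
    then have "y \<le> f v" by (rule P2)
    then show "y \<in> (\<Union>c\<in>f ` V. {y. y \<le> c})" using \<open>v \<in> V\<close> by blast
  qed
  moreover have "countable (\<Union>c\<in>f ` V. {y. y \<le> c})" by (intro countable_UN countable_image V(1) ctbl_le)
  ultimately have "countable (UNIV :: 'a set)" using countable_subset by blast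
  then show False using U1 unfolding omega1_type_def by simp
qed

lemma hs: "hereditarily separable_space X"
  unfolding hereditarily_def
proof (intro allI impI)
  fix Y assume "Y \<subseteq> topspace X"
  define Dk where "Dk k = {z\<in>Y. \<forall>y\<in>Y. y < z \<longrightarrow> \<not> rel k y z}" for k
  define D where "D = (\<Union>k. Dk k)"
  have "countable (Dk k)" for k
  proof (rule ccontr)
    assume "uncountable (Dk k)"
    then obtain y z where "y \<in> Dk k" "z \<in> Dk k" "y < z" "rel k y z" using P7 by blast
    then show False unfolding Dk_def by blast
  qed
  then have cD: "countable D" unfolding D_def by auto
  have DY: "D \<subseteq> Y" unfolding D_def Dk_def by auto
  have "z \<in> X closure_of D" if "z \<in> Y" for z
    using that
  proof (induction z rule: less_induct)
    case (less z)
    show ?case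
    proof (cases "z \<in> D")
      case True
      then show ?thesis using closure_of_subset[of D X] topX by auto
    next
      case False
      then have nd: "\<forall>k. \<exists>y\<in>Y. y < z \<and> rel k y z" using less.prems unfolding D_def Dk_def by blast
      show ?thesis unfolding in_closure_of topX
      proof (intro conjI allI impI)
        fix T assume T: "z \<in> T \<and> openin X T"
        then obtain k where k: "N k z \<subseteq> T" unfolding openX opn_def by blast
        obtain y where y: "y \<in> Y" "y < z" "rel k y z" using nd by blast
        then have "y \<in> X closure_of D" using less.IH by blast
        moreover have "y \<in> T" using k y unfolding N_def by auto
        ultimately show "\<exists>y. y \<in> D \<and> y \<in> T" using T unfolding in_closure_of by blast
      qed simp
    qed
  qed
  then have "subtopology X Y closure_of D = topspace (subtopology X Y)"
    unfolding closure_of_subtopology topspace_subtopology using DY topX by (auto simp: Int_absorb1)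
  then show "separable_space (subtopology X Y)"
    unfolding separable_space_def using cD DY topX by (intro exI[of _ D]) auto
qed

lemma main: "\<exists>X :: 'a topology. first_countable X \<and> t1_space X \<and> regular_space X \<and>
           hereditarily separable_space X \<and> \<not> Lindelof_space X"
  using fc t1 reg hs notL by blast

end

lemma ex_switch: "P (0::nat) \<Longrightarrow> \<not> P N \<Longrightarrow> \<exists>k. P k \<and> \<not> P (Suc k)"
  by (induction N) auto

lemma init_seg_Un: "init_seg A E \<Longrightarrow> init_seg B E \<Longrightarrow> init_seg (A \<union> B) E"
  unfolding init_seg_def by blast

definition pos :: "'a::linorder set \<Rightarrow> 'a \<Rightarrow> nat" where
  "pos A x = card {y\<in>A. y < x}"

lemma pos_lt: assumes "finite A" "x \<in> A" shows "pos A x < card A"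
proof -
  have "{y\<in>A. y < x} \<subset> A" using assms by auto
  then show ?thesis unfolding pos_def using assms(1) by (simp add: psubset_card_mono)
qed

lemma pos_mono: assumes "finite A" "x \<in> A" "y \<in> A" "x < y" shows "pos A x < pos A y"
proof -
  have "{z\<in>A. z < x} \<subset> {z\<in>A. z < y}" using assms by auto
  moreover have "finite {z\<in>A. z < y}" using assms(1) by simp
  ultimately show ?thesis unfolding pos_def by (simp add: psubset_card_mono)
qed

lemma pos_le_iff: assumes "finite A" "x \<in> A" "y \<in> A" shows "pos A x \<le> pos A y \<longleftrightarrow> x \<le> y"
  using pos_mono[OF assms(1) assms(2,3)] pos_mono[OF assms(1) assms(3,2)]
  by (metis leD le_less_linear order.order_iff_strict)

lemma pos_inj: assumes "finite A" "x \<in> A" "y \<in> A" "pos A x = pos A y" shows "x = y"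
  using pos_le_iff[OF assms(1-3)] pos_le_iff[OF assms(1) assms(3,2)] assms(4) by auto

lemma pos_sorted: assumes "finite A" "i < card A"
  shows "pos A (sorted_list_of_set A ! i) = i"
proof -
  define xs where "xs = sorted_list_of_set A"
  have s: "sorted_wrt (<) xs" unfolding xs_def by simp
  have d: "distinct xs" unfolding xs_def by simp
  have sA: "set xs = A" unfolding xs_def using assms by simp
  have len: "length xs = card A" unfolding xs_def by simp
  have "{y\<in>A. y < xs ! i} = set (take i xs)"
  proof
    show "{y \<in> A. y < xs ! i} \<subseteq> set (take i xs)"
    proof
      fix y assume "y \<in> {y \<in> A. y < xs ! i}"
      then obtain j where j: "j < length xs" "xs ! j = y" "y < xs ! i" using sA by (auto simp: in_set_conv_nth)
      have "j < i"
      proof (rule ccontr)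
        assume "\<not> j < i"
        then have "i \<le> j" by simp
        then have "xs ! i \<le> xs ! j" using s j(1)
          by (metis le_neq_implies_less order.order_iff_strict sorted_wrt_nth_less)
        then show False using j by simp
      qed
      then show "y \<in> set (take i xs)" using j by (auto simp: in_set_conv_nth)
    qed
  next
    show "set (take i xs) \<subseteq> {y \<in> A. y < xs ! i}"
    proof
      fix y assume "y \<in> set (take i xs)"
      then obtain j where j: "j < i" "xs ! j = y" using assms len by (auto simp: in_set_conv_nth)
      then have "y < xs ! i" using s assms len sorted_wrt_nth_less by fastforce
      moreover have "y \<in> A" using j assms len sA by auto
      ultimately show "y \<in> {y \<in> A. y < xs ! i}" by simp
    qed
  qed
  moreover have "card (set (take i xs)) = i" using d assms len by (simp add: distinct_card)
  ultimately show ?thesis unfolding pos_def xs_def by simp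
qed

locale cscheme =
  fixes F :: "'a::wellorder set set" and m r :: "nat \<Rightarrow> nat"
  assumes ty: "is_type m (\<lambda>_. 2) r"
    and cs: "construction_scheme UNIV m (\<lambda>_. 2) r F"
begin

lemma r_lt: "r (Suc k) < m k" using ty unfolding is_type_def by (elim conjE) blast
lemma m_Suc: "m (Suc k) = r (Suc k) + (m k - r (Suc k)) * 2" using ty unfolding is_type_def by (elim conjE) blast
lemma m0: "m 0 = 1" using ty unfolding is_type_def by (elim conjE) assumption

lemma cs1: "\<forall>F\<in>F. finite F \<and> F \<subseteq> UNIV"
  using cs unfolding construction_scheme_def by (elim conjE) assumption
lemma cs2: "\<forall>A. finite A \<and> A \<subseteq> UNIV \<longrightarrow> (\<exists>F\<in>F. A \<subseteq> F)"
  using cs unfolding construction_scheme_def by (elim conjE) assumption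
lemma cs3: "\<forall>k. \<forall>E\<in>level F k. card E = m k"
  using cs unfolding construction_scheme_def by (elim conjE) assumption
lemma cs4: "\<forall>k. \<forall>E\<in>level F k. \<forall>G\<in>level F k. init_seg (E \<inter> G) E \<and> init_seg (E \<inter> G) G"
  using cs unfolding construction_scheme_def by (elim conjE) assumption
lemma cs5: "\<forall>k. \<forall>G\<in>level F (Suc k). \<exists>!Fs. decomp F (\<lambda>_. 2) r k G Fs"
  using cs unfolding construction_scheme_def by (elim conjE) assumption

lemma F_fin: "A \<in> F \<Longrightarrow> finite A" using cs1 by blast

lemma rank_F: "rank_ge F k A \<Longrightarrow> A \<in> F" by (cases k) auto

lemma rank_down: "rank_ge F (Suc k) A \<Longrightarrow> rank_ge F k A"
proof (induction k arbitrary: A)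
  case 0 then show ?case by simp
next
  case (Suc k)
  then obtain B where "rank_ge F (Suc k) B" "B \<subset> A" "A \<in> F" by auto
  then show ?case using Suc.IH by auto
qed

lemma rank_mono: "k \<le> j \<Longrightarrow> rank_ge F j A \<Longrightarrow> rank_ge F k A"
  by (induction j rule: dec_induct) (use rank_down in blast)+

lemma rank_card: "rank_ge F k A \<Longrightarrow> k \<le> card A"
proof (induction k arbitrary: A)
  case 0 then show ?case by simp
next
  case (Suc k)
  then obtain B where B: "rank_ge F k B" "B \<subset> A" "A \<in> F" by auto
  then have "card B < card A" using F_fin psubset_card_mono by blast
  then show ?case using Suc.IH[OF B(1)] by simp
qed

lemma ex_level: assumes "A \<in> F" shows "\<exists>k. A \<in> level F k"
proof -
  have "rank_ge F 0 A" using assms by simp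
  moreover have "\<not> rank_ge F (Suc (card A)) A" using rank_card by fastforce
  ultimately obtain k where "rank_ge F k A" "\<not> rank_ge F (Suc k) A"
    using ex_switch[of "\<lambda>k. rank_ge F k A"] by blast
  then show ?thesis unfolding level_def by blast
qed

lemma level_F: "A \<in> level F k \<Longrightarrow> A \<in> F" unfolding level_def using rank_F by blast

lemma level_unique: assumes "A \<in> level F k" "A \<in> level F j" shows "k = j"
proof (rule ccontr)
  assume "k \<noteq> j"
  then have "Suc k \<le> j \<or> Suc j \<le> k" by arith
  then show False using assms rank_mono unfolding level_def by blast
qed

lemma level_sub: assumes "A \<in> level F k" "B \<in> level F j" "A \<subset> B" shows "k < j"
proof (rule ccontr)
  assume "\<not> k < j"
  have "rank_ge F (Suc k) B" using assms unfolding level_def by (auto intro: level_F[OF assms(2)])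
  moreover have "B \<in> F" using level_F assms by blast
  ultimately have "rank_ge F (Suc j) B" using \<open>\<not> k < j\<close> rank_mono[of "Suc j" "Suc k"] by simp
  then show False using assms unfolding level_def by blast
qed

lemma level_subeq: "A \<in> level F k \<Longrightarrow> B \<in> level F j \<Longrightarrow> A \<subseteq> B \<Longrightarrow> k \<le> j"
  using level_sub level_unique by (metis order.order_iff_strict psubsetI)

lemma level_card: "A \<in> level F k \<Longrightarrow> card A = m k"
  using cs3 by blast

lemma level_fin: "A \<in> level F k \<Longrightarrow> finite A" using level_F F_fin by blast

lemma cover: "finite A \<Longrightarrow> \<exists>K E. E \<in> level F K \<and> A \<subseteq> E"
proof -
  assume "finite A"
  then obtain E where "E \<in> F" "A \<subseteq> E" using cs2 by blast
  then show ?thesis using ex_level by blast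
qed

lemma coh: "E \<in> level F k \<Longrightarrow> G \<in> level F k \<Longrightarrow> init_seg (E \<inter> G) E \<and> init_seg (E \<inter> G) G"
  using cs4 by blast

definition B0 where "B0 k G = blocks F (\<lambda>_. 2) r k G ! 0"
definition B1 where "B1 k G = blocks F (\<lambda>_. 2) r k G ! 1"
definition Rt where "Rt k G = B0 k G \<inter> B1 k G"

lemma dec: assumes "G \<in> level F (Suc k)"
  shows "decomp F (\<lambda>_. 2) r k G (blocks F (\<lambda>_. 2) r k G)"
proof -
  have "\<exists>!Fs. decomp F (\<lambda>_. 2) r k G Fs" using cs5 assms by blast
  then show ?thesis unfolding blocks_def by (rule theI')
qed

lemma decB: assumes "G \<in> level F (Suc k)"
  shows "B0 k G \<in> level F k" "B1 k G \<in> level F k" "G = B0 k G \<union> B1 k G"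
    "card (Rt k G) = r (Suc k)" "set_less (Rt k G) (B0 k G - Rt k G)"
    "set_less (B0 k G - Rt k G) (B1 k G - Rt k G)"
proof -
  define Fs where "Fs = blocks F (\<lambda>_. 2) r k G"
  have d: "decomp F (\<lambda>_. 2) r k G Fs" using dec[OF assms] unfolding Fs_def .
  have len: "length Fs = 2" using d unfolding decomp_def by (elim conjE) assumption
  have lev: "\<forall>i<length Fs. Fs ! i \<in> level F k" using d unfolding decomp_def by (elim conjE) assumption
  have un: "G = \<Union>(set Fs)" using d unfolding decomp_def by (elim conjE) assumption
  have ex: "\<exists>R. card R = r (Suc k) \<and>
          (\<forall>i<length Fs. \<forall>j<length Fs. i \<noteq> j \<longrightarrow> Fs ! i \<inter> Fs ! j = R) \<and>
          set_less R (Fs ! 0 - R) \<and>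
          (\<forall>i. Suc i < length Fs \<longrightarrow> set_less (Fs ! i - R) (Fs ! Suc i - R))"
    using d unfolding decomp_def by (elim conjE) assumption
  obtain a b where Fs: "Fs = [a, b]" using len
    by (metis One_nat_def Suc_1 length_0_conv length_Suc_conv)
  have b0: "B0 k G = a" and b1: "B1 k G = b" unfolding B0_def B1_def Fs_def[symmetric] Fs by auto
  show "B0 k G \<in> level F k" "B1 k G \<in> level F k" using lev unfolding b0 b1 Fs by auto
  show "G = B0 k G \<union> B1 k G" using un unfolding b0 b1 Fs by simp
  obtain R where R1: "card R = r (Suc k)" and R2: "\<forall>i<length Fs. \<forall>j<length Fs. i \<noteq> j \<longrightarrow> Fs ! i \<inter> Fs ! j = R"
    and R3: "set_less R (Fs ! 0 - R)" and R4: "\<forall>i. Suc i < length Fs \<longrightarrow> set_less (Fs ! i - R) (Fs ! Suc i - R)"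
    using ex by blast
  have "a \<inter> b = R" using R2 unfolding Fs by (metis One_nat_def length_Cons list.size(3) nth_Cons_0 nth_Cons_Suc lessI zero_less_Suc zero_neq_one)
  then have RR: "Rt k G = R" unfolding Rt_def b0 b1 .
  show "card (Rt k G) = r (Suc k)" using R1 RR by simp
  show "set_less (Rt k G) (B0 k G - Rt k G)" using R3 unfolding RR b0 Fs by simp
  have "set_less (Fs ! 0 - R) (Fs ! Suc 0 - R)" using R4 len by simp
  then show "set_less (B0 k G - Rt k G) (B1 k G - Rt k G)" unfolding RR b0 b1 Fs by simp
qed

lemma Rt_sub: "Rt k G \<subseteq> B0 k G" "Rt k G \<subseteq> B1 k G" unfolding Rt_def by auto

lemma B0R_ne: assumes "G \<in> level F (Suc k)" shows "B0 k G - Rt k G \<noteq> {}"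
proof
  assume "B0 k G - Rt k G = {}"
  then have sub: "B0 k G \<subseteq> Rt k G" by blast
  have l0: "B0 k G \<in> level F k" by (rule decB(1)[OF assms])
  have fin0: "finite (B0 k G)" by (rule level_fin[OF l0])
  have finR: "finite (Rt k G)" using fin0 Rt_sub(1) by (rule finite_subset[rotated])
  have "card (B0 k G) \<le> card (Rt k G)" using finR sub by (rule card_mono)
  moreover have "card (B0 k G) = m k" by (rule level_card[OF l0])
  moreover have "card (Rt k G) = r (Suc k)" by (rule decB(4)[OF assms])
  ultimately show False using r_lt[of k] by linarith
qed

lemma setless_R1: assumes "G \<in> level F (Suc k)" shows "set_less (Rt k G) (B1 k G - Rt k G)"
proof -
  obtain c where c: "c \<in> B0 k G - Rt k G" using B0R_ne[OF assms] by blast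
  show ?thesis unfolding set_less_def
  proof (intro ballI)
    fix a b assume "a \<in> Rt k G" "b \<in> B1 k G - Rt k G"
    then have "a < c" "c < b" using decB(5,6)[OF assms] c unfolding set_less_def by auto
    then show "a < b" by simp
  qed
qed

lemma cross_coh: "E \<in> level F K \<Longrightarrow> G \<in> level F L \<Longrightarrow> K \<le> L \<Longrightarrow> init_seg (E \<inter> G) E"
proof (induction L arbitrary: G)
  case 0 then show ?case using coh by simp
next
  case (Suc L)
  show ?case
  proof (cases "K = Suc L")
    case True then show ?thesis using coh Suc.prems by blast
  next
    case False
    then have "K \<le> L" using Suc.prems by simp
    have "init_seg (E \<inter> B0 L G) E" "init_seg (E \<inter> B1 L G) E"
      using Suc.IH[OF Suc.prems(1) _ \<open>K \<le> L\<close>] decB(1,2)[OF Suc.prems(2)] by auto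
    then have "init_seg (E \<inter> B0 L G \<union> E \<inter> B1 L G) E" by (rule init_seg_Un)
    moreover have "E \<inter> G = E \<inter> B0 L G \<union> E \<inter> B1 L G" using decB(3)[OF Suc.prems(2)] by blast
    ultimately show ?thesis by simp
  qed
qed

lemma one_block: assumes "E \<in> level F K" "G \<in> level F (Suc L)" "K \<le> L" "E \<subseteq> G"
  shows "E \<subseteq> B0 L G \<or> E \<subseteq> B1 L G"
proof (rule ccontr)
  assume "\<not> (E \<subseteq> B0 L G \<or> E \<subseteq> B1 L G)"
  then obtain a c where ac: "a \<in> E" "a \<notin> B1 L G" "c \<in> E" "c \<notin> B0 L G" by blast
  have G: "G = B0 L G \<union> B1 L G" by (rule decB(3)[OF assms(2)])
  have a: "a \<in> B0 L G - Rt L G" using ac assms(4) G unfolding Rt_def by blast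
  have c: "c \<in> B1 L G - Rt L G" using ac assms(4) G unfolding Rt_def by blast
  have "a < c" using decB(6)[OF assms(2)] a c unfolding set_less_def by blast
  have "init_seg (E \<inter> B1 L G) E"
    using cross_coh[OF assms(1) decB(2)[OF assms(2)] assms(3)] .
  then have "a \<in> B1 L G" using ac c \<open>a < c\<close> unfolding init_seg_def by blast
  then show False using ac by blast
qed

lemma pos_same_level: assumes "E \<in> level F K" "E' \<in> level F K" "x \<in> E" "x \<in> E'"
  shows "pos E x = pos E' x"
proof -
  have "init_seg (E \<inter> E') E" "init_seg (E \<inter> E') E'" using coh[OF assms(1,2)] by auto
  then have "{y\<in>E. y < x} = {y\<in>E'. y < x}" using assms(3,4) unfolding init_seg_def by blast
  then show ?thesis unfolding pos_def by simp
qed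


lemma B_sub: assumes "G \<in> level F (Suc k)" shows "B0 k G \<subseteq> G" "B1 k G \<subseteq> G"
  using decB(3)[OF assms] by blast+

lemma finB: assumes "G \<in> level F (Suc k)" shows "finite (B0 k G)" "finite (B1 k G)" "finite (Rt k G)" "finite G"
proof -
  show f0: "finite (B0 k G)" by (rule level_fin[OF decB(1)[OF assms]])
  show "finite (B1 k G)" by (rule level_fin[OF decB(2)[OF assms]])
  show "finite G" by (rule level_fin[OF assms])
  show "finite (Rt k G)" using f0 Rt_sub(1) by (rule finite_subset[rotated])
qed

lemma pos_B0: assumes "G \<in> level F (Suc k)" "x \<in> B0 k G" shows "pos G x = pos (B0 k G) x"
proof -
  have GU: "G = B0 k G \<union> B1 k G" by (rule decB(3)[OF assms(1)])
  have "{y\<in>G. y < x} = {y\<in>B0 k G. y < x}"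
  proof
    show "{y\<in>B0 k G. y < x} \<subseteq> {y\<in>G. y < x}" using GU by blast
    show "{y\<in>G. y < x} \<subseteq> {y\<in>B0 k G. y < x}"
    proof
      fix y assume y: "y \<in> {y\<in>G. y < x}"
      then have yG: "y \<in> G" and yx: "y < x" by auto
      show "y \<in> {y\<in>B0 k G. y < x}"
      proof (rule ccontr)
        assume "y \<notin> {y\<in>B0 k G. y < x}"
        then have "y \<notin> B0 k G" using yx by simp
        then have y1: "y \<in> B1 k G - Rt k G" using yG GU unfolding Rt_def by blast
        have "x < y"
        proof (cases "x \<in> Rt k G")
          case True then show ?thesis using setless_R1[OF assms(1)] y1 unfolding set_less_def by blast
        next
          case False
          then have "x \<in> B0 k G - Rt k G" using assms(2) by simp
          then show ?thesis using decB(6)[OF assms(1)] y1 unfolding set_less_def by blast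
        qed
        then show False using yx by simp
      qed
    qed
  qed
  then show ?thesis unfolding pos_def by simp
qed

lemma pos_R: assumes "G \<in> level F (Suc k)" "x \<in> Rt k G"
  shows "pos G x = pos (B1 k G) x" "pos (B1 k G) x < r (Suc k)"
proof -
  have GU: "G = B0 k G \<union> B1 k G" by (rule decB(3)[OF assms(1)])
  have "{y\<in>G. y < x} = {y\<in>B1 k G. y < x}"
  proof
    show "{y\<in>B1 k G. y < x} \<subseteq> {y\<in>G. y < x}" using GU by blast
    show "{y\<in>G. y < x} \<subseteq> {y\<in>B1 k G. y < x}"
    proof
      fix y assume y: "y \<in> {y\<in>G. y < x}"
      then have yG: "y \<in> G" and yx: "y < x" by auto
      show "y \<in> {y\<in>B1 k G. y < x}"
      proof (rule ccontr)
        assume "y \<notin> {y\<in>B1 k G. y < x}"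
        then have "y \<notin> B1 k G" using yx by simp
        then have y1: "y \<in> B0 k G - Rt k G" using yG GU unfolding Rt_def by blast
        have "x < y" using decB(5)[OF assms(1)] y1 assms(2) unfolding set_less_def by blast
        then show False using yx by simp
      qed
    qed
  qed
  then show "pos G x = pos (B1 k G) x" unfolding pos_def by simp
  have sub: "{y\<in>B1 k G. y < x} \<subseteq> Rt k G - {x}"
  proof
    fix y assume y: "y \<in> {y\<in>B1 k G. y < x}"
    then have yB: "y \<in> B1 k G" and yx: "y < x" by auto
    show "y \<in> Rt k G - {x}"
    proof (rule ccontr)
      assume "y \<notin> Rt k G - {x}"
      then have "y \<in> B1 k G - Rt k G" using yB yx by auto
      then have "x < y" using setless_R1[OF assms(1)] assms(2) unfolding set_less_def by blast
      then show False using yx by simp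
    qed
  qed
  have fR: "finite (Rt k G)" by (rule finB(3)[OF assms(1)])
  then have "card {y\<in>B1 k G. y < x} \<le> card (Rt k G - {x})" using sub by (intro card_mono) auto
  also have "\<dots> < card (Rt k G)" using fR assms(2) by (rule card_Diff1_less)
  finally show "pos (B1 k G) x < r (Suc k)" unfolding pos_def decB(4)[OF assms(1)] .
qed

lemma pos_B1N: assumes "G \<in> level F (Suc k)" "x \<in> B1 k G - Rt k G"
  shows "pos G x = pos (B1 k G) x + (m k - r (Suc k))" "r (Suc k) \<le> pos (B1 k G) x"
proof -
  have eq: "{y\<in>G. y < x} = (B0 k G - Rt k G) \<union> {y\<in>B1 k G. y < x}"
  proof
    show "(B0 k G - Rt k G) \<union> {y\<in>B1 k G. y < x} \<subseteq> {y\<in>G. y < x}"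
      using B_sub[OF assms(1)] decB(6)[OF assms(1)] assms(2) unfolding set_less_def by blast
    show "{y\<in>G. y < x} \<subseteq> (B0 k G - Rt k G) \<union> {y\<in>B1 k G. y < x}"
      using decB(3)[OF assms(1)] unfolding Rt_def by blast
  qed
  have disj: "(B0 k G - Rt k G) \<inter> {y\<in>B1 k G. y < x} = {}" unfolding Rt_def by blast
  have c0: "card (B0 k G - Rt k G) = m k - r (Suc k)"
    using card_Diff_subset[OF finB(3)[OF assms(1)] Rt_sub(1)] level_card[OF decB(1)[OF assms(1)]] decB(4)[OF assms(1)]
    by simp
  have "card {y\<in>G. y < x} = card (B0 k G - Rt k G) + card {y\<in>B1 k G. y < x}"
    unfolding eq using finB[OF assms(1)] disj by (intro card_Un_disjoint) auto
  then show "pos G x = pos (B1 k G) x + (m k - r (Suc k))" unfolding pos_def c0 by simp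
  have "Rt k G \<subseteq> {y\<in>B1 k G. y < x}"
    using Rt_sub(2) setless_R1[OF assms(1)] assms(2) unfolding set_less_def by blast
  then have "card (Rt k G) \<le> card {y\<in>B1 k G. y < x}" using finB(2)[OF assms(1)] by (intro card_mono) auto
  then show "r (Suc k) \<le> pos (B1 k G) x" unfolding pos_def decB(4)[OF assms(1)] .
qed

section \<open>Canonical combinatorics\<close>

definition up :: "nat \<Rightarrow> nat \<Rightarrow> nat \<Rightarrow> nat" where
  "up K i p = (if i = 0 \<or> p < r (Suc K) then p else p + (m K - r (Suc K)))"
definition low :: "nat \<Rightarrow> nat \<Rightarrow> nat" where
  "low K p = (if p < m K then p else p - (m K - r (Suc K)))"
definition blk :: "nat \<Rightarrow> nat \<Rightarrow> nat \<Rightarrow> bool" where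
  "blk K i p = (if i = 0 then p < m K else (p < r (Suc K) \<or> m K \<le> p))"
definition sb :: "nat \<Rightarrow> nat \<Rightarrow> nat \<Rightarrow> bool" where
  "sb K p q = ((blk K 0 p \<and> blk K 0 q) \<or> (blk K 1 p \<and> blk K 1 q))"

fun Rc :: "nat \<Rightarrow> nat \<Rightarrow> nat \<Rightarrow> nat \<Rightarrow> bool" where
  "Rc 0 k p q = (p = q)"
| "Rc (Suc K) k p q = (p = q \<or> (p < q \<and> (sb K p q \<or> k \<le> K) \<and> Rc K k (low K p) (low K q)))"

inductive ups :: "nat \<Rightarrow> nat \<Rightarrow> (nat \<Rightarrow> nat) \<Rightarrow> bool" where
  ups_id: "ups K K id"
| ups_step: "ups K0 K U \<Longrightarrow> i < 2 \<Longrightarrow> ups K0 (Suc K) (up K i \<circ> U)"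

lemma m_Suc': "m (Suc K) = 2 * m K - r (Suc K)" using m_Suc[of K] r_lt[of K] by simp

lemma Rc_refl: "Rc K k p p" by (cases K) auto

lemma Rc_le: "Rc K k p q \<Longrightarrow> p \<le> q" by (cases K) auto

lemma Rc_anti: "Rc K (Suc k) p q \<Longrightarrow> Rc K k p q"
  by (induction K arbitrary: p q) auto

lemma up_range: "p < m K \<Longrightarrow> up K i p < m (Suc K)"
  using r_lt[of K] m_Suc'[of K] unfolding up_def by auto

lemma low_up: "p < m K \<Longrightarrow> low K (up K i p) = p"
  using r_lt[of K] unfolding up_def low_def by auto

lemma up_blk: "p < m K \<Longrightarrow> i < 2 \<Longrightarrow> blk K i (up K i p)"
  using r_lt[of K] unfolding up_def blk_def by auto

lemma up_mono: "p < q \<Longrightarrow> up K i p < up K i q"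
  using r_lt[of K] unfolding up_def by auto

lemma up_mono_le: "p \<le> q \<Longrightarrow> up K i p \<le> up K i q"
  using up_mono[of p q K i] by (cases "p = q") auto

lemma low_range: "p < m (Suc K) \<Longrightarrow> low K p < m K"
  using r_lt[of K] m_Suc'[of K] unfolding low_def by auto

lemma blk_down: "w < x \<Longrightarrow> sb K w x \<Longrightarrow> i < 2 \<Longrightarrow> blk K i x \<Longrightarrow> blk K i w"
  unfolding sb_def blk_def using r_lt[of K] by (cases "i = 0") auto

lemma sb_blk: "blk K i w \<Longrightarrow> blk K i x \<Longrightarrow> i < 2 \<Longrightarrow> sb K w x"
  unfolding sb_def by (cases "i = 0") (auto simp: less_2_cases_iff)

lemma low_inj: "sb K w q \<Longrightarrow> low K w = low K q \<Longrightarrow> w = q"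
  unfolding sb_def blk_def low_def using r_lt[of K] by (auto split: if_splits)

lemma Rc_up: assumes "p < m K" "q < m K" "i < 2"
  shows "Rc (Suc K) k (up K i p) (up K i q) = Rc K k p q"
proof (cases "p = q")
  case True then show ?thesis using Rc_refl by simp
next
  case False
  have sb: "sb K (up K i p) (up K i q)" using up_blk assms sb_blk by blast
  show ?thesis
  proof (cases "p < q")
    case True
    have lt: "up K i p < up K i q" by (rule up_mono[OF True])
    then have ne: "up K i p \<noteq> up K i q" by simp
    show ?thesis using lt ne sb low_up[OF assms(1)] low_up[OF assms(2)] True by simp
  next
    case False
    then have "q < p" using \<open>p \<noteq> q\<close> by simp
    then have "up K i q < up K i p" by (rule up_mono)
    then show ?thesis using Rc_le[of K k p q] \<open>q < p\<close> by auto
  qed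
qed

lemma ups_le: "ups K0 K U \<Longrightarrow> K0 \<le> K"
  by (induction rule: ups.induct) auto

lemma ups_range: "ups K0 K U \<Longrightarrow> p < m K0 \<Longrightarrow> U p < m K"
  by (induction rule: ups.induct) (auto intro: up_range)

lemma Rc_ups: "ups K0 K U \<Longrightarrow> p < m K0 \<Longrightarrow> q < m K0 \<Longrightarrow> Rc K k (U p) (U q) = Rc K0 k p q"
proof (induction rule: ups.induct)
  case (ups_id K) then show ?case by simp
next
  case (ups_step K0 K U i)
  have "U p < m K" "U q < m K" using ups_range ups_step by auto
  then show ?case using Rc_up[of "U p" K "U q" i k] ups_step by simp
qed

lemma Rc_eq: "K \<le> j \<Longrightarrow> Rc K j w q \<Longrightarrow> w = q"
proof (induction K arbitrary: w q)
  case 0 then show ?case by simp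
next
  case (Suc K)
  show ?case
  proof (rule ccontr)
    assume "w \<noteq> q"
    then have "sb K w q" "Rc K j (low K w) (low K q)" using Suc.prems by auto
    then have "low K w = low K q" using Suc.IH Suc.prems by simp
    then show False using low_inj \<open>sb K w q\<close> \<open>w \<noteq> q\<close> by blast
  qed
qed

lemma Rc_open: "ups K0 K U \<Longrightarrow> p < m K0 \<Longrightarrow> q < m K0 \<Longrightarrow> K0 \<le> j \<Longrightarrow> k \<le> j \<Longrightarrow> Rc K0 k q p
  \<Longrightarrow> Rc K j w (U q) \<Longrightarrow> Rc K k w (U p)"
proof (induction arbitrary: w rule: ups.induct)
  case (ups_id K)
  then have "w = q" using Rc_eq by simp
  then show ?case using ups_id by simp
next
  case (ups_step K0 K U i)
  define a where "a = U q"
  define b where "b = U p"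
  have ab: "a < m K" "b < m K" unfolding a_def b_def using ups_range ups_step by auto
  have Rab: "Rc K k a b" unfolding a_def b_def using Rc_ups ups_step by simp
  have hyp: "Rc (Suc K) j w (up K i a)" using ups_step.prems unfolding a_def by simp
  show ?case unfolding b_def[symmetric] comp_def
  proof (cases "w = up K i a")
    case True
    then show "Rc (Suc K) k w (up K i b)" using Rc_up ab ups_step.hyps(2) Rab by simp
  next
    case False
    then have w1: "w < up K i a" "sb K w (up K i a) \<or> j \<le> K" "Rc K j (low K w) (low K (up K i a))"
      using hyp by auto
    have la: "low K (up K i a) = a" using low_up ab by simp
    have lb: "low K (up K i b) = b" using low_up ab by simp
    have IH: "Rc K k (low K w) b" using ups_step.IH ups_step.prems w1(3) la unfolding a_def b_def by simp
    have "a \<le> b" using Rab by (rule Rc_le)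
    then have lt: "w < up K i b" using w1(1) up_mono_le[of a b K i] by simp
    have "sb K w (up K i b) \<or> k \<le> K"
    proof (cases "j \<le> K")
      case True then show ?thesis using ups_step.prems by simp
    next
      case False
      then have "sb K w (up K i a)" using w1(2) by simp
      then have "blk K i w" using blk_down w1(1) up_blk ab ups_step.hyps(2) by blast
      then show ?thesis using sb_blk up_blk ab ups_step.hyps(2) by blast
    qed
    then show "Rc (Suc K) k w (up K i b)" using lt IH lb by simp
  qed
qed

lemma Rc_closed: "ups K0 K U \<Longrightarrow> p < m K0 \<Longrightarrow> q < m K0 \<Longrightarrow> K0 \<le> j \<Longrightarrow> \<not> Rc K0 k q p
  \<Longrightarrow> Rc K j w (U q) \<Longrightarrow> \<not> Rc K k w (U p)"
proof (induction arbitrary: w rule: ups.induct)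
  case (ups_id K)
  then have "w = q" using Rc_eq by simp
  then show ?case using ups_id by simp
next
  case (ups_step K0 K U i)
  define a where "a = U q"
  define b where "b = U p"
  have ab: "a < m K" "b < m K" unfolding a_def b_def using ups_range ups_step by auto
  have Rab: "\<not> Rc K k a b" unfolding a_def b_def using Rc_ups ups_step by simp
  have hyp: "Rc (Suc K) j w (up K i a)" using ups_step.prems unfolding a_def by simp
  show ?case unfolding b_def[symmetric] comp_def
  proof (cases "w = up K i a")
    case True
    then show "\<not> Rc (Suc K) k w (up K i b)" using Rc_up ab ups_step.hyps(2) Rab by simp
  next
    case False
    then have w1: "Rc K j (low K w) (low K (up K i a))" using hyp by auto
    have la: "low K (up K i a) = a" using low_up ab by simp
    have lb: "low K (up K i b) = b" using low_up ab by simp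
    have IH: "\<not> Rc K k (low K w) b" using ups_step.IH ups_step.prems w1 la unfolding a_def b_def by simp
    show "\<not> Rc (Suc K) k w (up K i b)"
    proof
      assume "Rc (Suc K) k w (up K i b)"
      then have "w = up K i b \<or> Rc K k (low K w) b" using lb by auto
      then show False
      proof
        assume "w = up K i b"
        then have "Rc K j b a" using w1 la lb by simp
        then have "\<not> Rc K k b b" using ups_step.IH ups_step.prems unfolding a_def b_def by simp
        then show False using Rc_refl by simp
      qed (use IH in simp)
    qed
  qed
qed


section \<open>Embedding chains\<close>

lemma pos_up1: assumes "G \<in> level F (Suc K)" "x \<in> B1 K G" shows "pos G x = up K 1 (pos (B1 K G) x)"
proof (cases "x \<in> Rt K G")
  case True
  then show ?thesis using pos_R[OF assms(1) True] unfolding up_def by simp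
next
  case False
  then have x1: "x \<in> B1 K G - Rt K G" using assms(2) by simp
  have a: "pos G x = pos (B1 K G) x + (m K - r (Suc K))" by (rule pos_B1N(1)[OF assms(1) x1])
  have b: "r (Suc K) \<le> pos (B1 K G) x" by (rule pos_B1N(2)[OF assms(1) x1])
  show ?thesis unfolding up_def using a b by simp
qed

lemma pos_range: assumes "E \<in> level F K" "x \<in> E" shows "pos E x < m K"
proof -
  have "pos E x < card E" by (rule pos_lt[OF level_fin[OF assms(1)] assms(2)])
  then show ?thesis using level_card[OF assms(1)] by simp
qed

lemma chain: "E \<in> level F K0 \<Longrightarrow> G \<in> level F K \<Longrightarrow> E \<subseteq> G \<Longrightarrow> \<exists>U. ups K0 K U \<and> (\<forall>x\<in>E. pos G x = U (pos E x))"
proof (induction K arbitrary: G)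
  case 0
  have "K0 \<le> 0" by (rule level_subeq[OF 0(1,2,3)])
  then have "K0 = 0" by simp
  then have "ups K0 0 id" using ups_id by simp
  moreover have "\<forall>x\<in>E. pos G x = id (pos E x)"
  proof
    fix x assume "x \<in> E"
    then show "pos G x = id (pos E x)" using pos_same_level[of E 0 G x] 0 \<open>K0 = 0\<close> by auto
  qed
  ultimately show ?case by blast
next
  case (Suc K)
  show ?case
  proof (cases "K0 = Suc K")
    case True
    then have "ups K0 (Suc K) id" using ups_id by simp
    moreover have "\<forall>x\<in>E. pos G x = id (pos E x)"
    proof
      fix x assume "x \<in> E"
      then show "pos G x = id (pos E x)" using pos_same_level[of E "Suc K" G x] Suc.prems True by auto
    qed
    ultimately show ?thesis by blast
  next
    case False
    then have "K0 \<le> K" using level_subeq[OF Suc.prems] by simp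
    from one_block[OF Suc.prems(1,2) this Suc.prems(3)]
    show ?thesis
    proof
      assume sub: "E \<subseteq> B0 K G"
      obtain U where U: "ups K0 K U" "\<forall>x\<in>E. pos (B0 K G) x = U (pos E x)"
        using Suc.IH[OF Suc.prems(1) decB(1)[OF Suc.prems(2)] sub] by blast
      have "ups K0 (Suc K) (up K 0 \<circ> U)" using ups_step[OF U(1)] by simp
      moreover have "\<forall>x\<in>E. pos G x = (up K 0 \<circ> U) (pos E x)"
        using U(2) pos_B0[OF Suc.prems(2)] sub unfolding up_def by auto
      ultimately show ?thesis by blast
    next
      assume sub: "E \<subseteq> B1 K G"
      obtain U where U: "ups K0 K U" "\<forall>x\<in>E. pos (B1 K G) x = U (pos E x)"
        using Suc.IH[OF Suc.prems(1) decB(2)[OF Suc.prems(2)] sub] by blast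
      have "ups K0 (Suc K) (up K 1 \<circ> U)" using ups_step[OF U(1)] by simp
      moreover have "\<forall>x\<in>E. pos G x = (up K 1 \<circ> U) (pos E x)"
        using U(2) pos_up1[OF Suc.prems(2)] sub by auto
      ultimately show ?thesis by blast
    qed
  qed
qed

definition rel :: "nat \<Rightarrow> 'a \<Rightarrow> 'a \<Rightarrow> bool" where
  "rel k y x \<longleftrightarrow> (\<exists>K E. E \<in> level F K \<and> y \<in> E \<and> x \<in> E \<and> Rc K k (pos E y) (pos E x))"

lemma Rc_chain: assumes "E \<in> level F K0" "G \<in> level F K" "E \<subseteq> G" "y \<in> E" "x \<in> E"
  shows "Rc K k (pos G y) (pos G x) = Rc K0 k (pos E y) (pos E x)"
proof -
  obtain U where U: "ups K0 K U" "\<forall>x\<in>E. pos G x = U (pos E x)" using chain[OF assms(1-3)] by blast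
  show ?thesis using U Rc_ups[OF U(1) pos_range[OF assms(1) assms(4)] pos_range[OF assms(1) assms(5)]] assms(4,5)
    by simp
qed

lemma consist: assumes "E \<in> level F K" "E' \<in> level F K'" "y \<in> E" "x \<in> E" "y \<in> E'" "x \<in> E'"
  shows "Rc K k (pos E y) (pos E x) = Rc K' k (pos E' y) (pos E' x)"
proof -
  have "finite (E \<union> E')" using level_fin[OF assms(1)] level_fin[OF assms(2)] by simp
  then obtain L G where G: "G \<in> level F L" "E \<union> E' \<subseteq> G" using cover by blast
  have s1: "E \<subseteq> G" and s2: "E' \<subseteq> G" using G(2) by auto
  have "Rc L k (pos G y) (pos G x) = Rc K k (pos E y) (pos E x)" by (rule Rc_chain[OF assms(1) G(1) s1 assms(3,4)])
  moreover have "Rc L k (pos G y) (pos G x) = Rc K' k (pos E' y) (pos E' x)" by (rule Rc_chain[OF assms(2) G(1) s2 assms(5,6)])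
  ultimately show ?thesis by simp
qed

lemma rel_iff: assumes "E \<in> level F K" "y \<in> E" "x \<in> E"
  shows "rel k y x \<longleftrightarrow> Rc K k (pos E y) (pos E x)"
proof
  assume "rel k y x"
  then obtain K' E' where E': "E' \<in> level F K'" "y \<in> E'" "x \<in> E'" "Rc K' k (pos E' y) (pos E' x)"
    unfolding rel_def by blast
  then show "Rc K k (pos E y) (pos E x)" using consist[OF assms(1) E'(1) assms(2,3) E'(2,3)] by simp
next
  assume "Rc K k (pos E y) (pos E x)"
  then show "rel k y x" unfolding rel_def using assms by blast
qed

lemma common2: "\<exists>K E. E \<in> level F K \<and> y \<in> E \<and> x \<in> E"
proof -
  have "finite {y, x}" by simp
  then obtain K E where "E \<in> level F K" "{y, x} \<subseteq> E" using cover by blast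
  then show ?thesis by blast
qed

lemma Q1: "rel k x x"
proof -
  obtain K E where "E \<in> level F K" "x \<in> E" using common2[of x x] by blast
  then show ?thesis unfolding rel_def using Rc_refl by blast
qed

lemma Q2: assumes "rel k y x" shows "y \<le> x"
proof -
  obtain K E where E: "E \<in> level F K" "y \<in> E" "x \<in> E" "Rc K k (pos E y) (pos E x)" using assms unfolding rel_def by blast
  then have "pos E y \<le> pos E x" using Rc_le by blast
  then show ?thesis using pos_le_iff level_fin E by blast
qed

lemma Q3: "rel (Suc k) y x \<Longrightarrow> rel k y x" unfolding rel_def using Rc_anti by blast

lemma Q4: assumes "y \<noteq> x" shows "\<exists>k. \<not> rel k y x"
proof -
  obtain K E where E: "E \<in> level F K" "y \<in> E" "x \<in> E" using common2 by blast
  have "\<not> rel K y x"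
  proof
    assume "rel K y x"
    then have "Rc K K (pos E y) (pos E x)" using rel_iff E by blast
    then have "pos E y = pos E x" using Rc_eq by blast
    then show False using pos_inj level_fin E assms by blast
  qed
  then show ?thesis by blast
qed

lemma Q5: assumes "rel k y x" shows "\<exists>j. \<forall>w. rel j w y \<longrightarrow> rel k w x"
proof -
  obtain K0 E0 where E0: "E0 \<in> level F K0" "y \<in> E0" "x \<in> E0" using common2 by blast
  have R0: "Rc K0 k (pos E0 y) (pos E0 x)" using rel_iff E0 assms by blast
  have "rel k w x" if "rel (max K0 k) w y" for w
  proof -
    have "finite (insert w E0)" using level_fin E0 by blast
    then obtain K G where G: "G \<in> level F K" "insert w E0 \<subseteq> G" using cover by blast
    obtain U where U: "ups K0 K U" "\<forall>x\<in>E0. pos G x = U (pos E0 x)" using chain[OF E0(1) G(1)] G(2) by blast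
    have "Rc K (max K0 k) (pos G w) (pos G y)" using rel_iff[OF G(1)] G(2) E0 that by blast
    then have "Rc K (max K0 k) (pos G w) (U (pos E0 y))" using U(2) E0 by simp
    then have "Rc K k (pos G w) (U (pos E0 x))"
      by (rule Rc_open[OF U(1) pos_range[OF E0(1) E0(3)] pos_range[OF E0(1) E0(2)] max.cobounded1 max.cobounded2 R0])
    then have "Rc K k (pos G w) (pos G x)" using U(2) E0 by simp
    then show ?thesis using rel_iff[OF G(1)] G(2) E0 by blast
  qed
  then show ?thesis by blast
qed

lemma Q6: assumes "\<not> rel k y x" shows "\<exists>j. \<forall>w. rel j w y \<longrightarrow> \<not> rel k w x"
proof -
  obtain K0 E0 where E0: "E0 \<in> level F K0" "y \<in> E0" "x \<in> E0" using common2 by blast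
  have R0: "\<not> Rc K0 k (pos E0 y) (pos E0 x)" using rel_iff E0 assms by blast
  have "\<not> rel k w x" if "rel K0 w y" for w
  proof -
    have "finite (insert w E0)" using level_fin E0 by blast
    then obtain K G where G: "G \<in> level F K" "insert w E0 \<subseteq> G" using cover by blast
    obtain U where U: "ups K0 K U" "\<forall>x\<in>E0. pos G x = U (pos E0 x)" using chain[OF E0(1) G(1)] G(2) by blast
    have "Rc K K0 (pos G w) (pos G y)" using rel_iff[OF G(1)] G(2) E0 that by blast
    then have "Rc K K0 (pos G w) (U (pos E0 y))" using U(2) E0 by simp
    then have "\<not> Rc K k (pos G w) (U (pos E0 x))"
      by (rule Rc_closed[OF U(1) pos_range[OF E0(1) E0(3)] pos_range[OF E0(1) E0(2)] order.refl R0])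
    then have "\<not> Rc K k (pos G w) (pos G x)" using U(2) E0 by simp
    then show ?thesis using rel_iff[OF G(1)] G(2) E0 by blast
  qed
  then show ?thesis by blast
qed


lemma Q7: assumes cap: "n_capturing 2 (\<lambda>_. 2) r F" and Y: "uncountable Y"
  shows "\<exists>y z. y \<in> Y \<and> z \<in> Y \<and> y < z \<and> rel k y z"
proof -
  define S where "S = (\<lambda>y. {y}) ` Y"
  have Sfin: "S \<subseteq> {A. finite A}" unfolding S_def by auto
  have Sunc: "uncountable S"
  proof
    assume "countable S"
    moreover have "inj_on (\<lambda>y. {y}) Y" by (auto simp: inj_on_def)
    ultimately have "countable Y" unfolding S_def using countable_image_inj_on by blast
    then show False using Y by simp
  qed
  have "\<exists>C l G. C \<subseteq> S \<and> finite C \<and> card C = 2 \<and> l > k \<and> G \<in> level F l \<and>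
                     captures F (\<lambda>_. 2) r l G C"
    using cap[unfolded n_capturing_def, rule_format, OF conjI[OF Sfin Sunc]] by blast
  then obtain C l G where C: "C \<subseteq> S" "card C = 2" "l > k" "G \<in> level F l"
    and capt: "captures F (\<lambda>_. 2) r l G C" by blast
  obtain L where L: "l = Suc L" using C(3) by (cases l) auto
  have GL: "G \<in> level F (Suc L)" using C(4) L by simp
  have bl0: "blocks F (\<lambda>_. 2) r L G ! 0 = B0 L G" and bl1: "blocks F (\<lambda>_. 2) r L G ! 1 = B1 L G"
    unfolding B0_def B1_def by auto
  have rt: "root F (\<lambda>_. 2) r L G = Rt L G" unfolding root_def Rt_def B0_def B1_def by simp
  have "\<exists>cs. distinct cs \<and> set cs = C \<and>
         (\<forall>i<length cs. cs ! i \<subseteq> blocks F (\<lambda>_. 2) r L G ! i \<and> cs ! i - root F (\<lambda>_. 2) r L G \<noteq> {} \<and>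
                        incr_bij (blocks F (\<lambda>_. 2) r L G ! 0) (blocks F (\<lambda>_. 2) r L G ! i) ` (cs ! 0) = cs ! i)"
    using capt unfolding captures_def Let_def L by simp
  then obtain cs where cs: "distinct cs" "set cs = C"
    and csi: "\<forall>i<length cs. cs ! i \<subseteq> blocks F (\<lambda>_. 2) r L G ! i \<and> cs ! i - root F (\<lambda>_. 2) r L G \<noteq> {} \<and>
                        incr_bij (blocks F (\<lambda>_. 2) r L G ! 0) (blocks F (\<lambda>_. 2) r L G ! i) ` (cs ! 0) = cs ! i"
    by blast
  have len: "length cs = 2" using distinct_card[OF cs(1)] cs(2) C(2) by simp
  have "cs ! 0 \<in> S" "cs ! 1 \<in> S" using cs(2) C(1) len nth_mem[of 0 cs] nth_mem[of 1 cs] by auto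
  then obtain y z where y: "cs ! 0 = {y}" "y \<in> Y" and z: "cs ! 1 = {z}" "z \<in> Y" unfolding S_def by blast
  have i0: "{y} \<subseteq> B0 L G" "{y} - Rt L G \<noteq> {}" using csi[rule_format, of 0] len y bl0 rt by auto
  have i1: "{z} \<subseteq> B1 L G" "{z} - Rt L G \<noteq> {}" "incr_bij (B0 L G) (B1 L G) ` {y} = {z}"
    using csi[rule_format, of 1] len y z bl0 bl1 rt by auto
  have yB: "y \<in> B0 L G - Rt L G" using i0 by auto
  have zB: "z \<in> B1 L G - Rt L G" using i1 by auto
  have yz: "y < z" using decB(6)[OF GL] yB zB unfolding set_less_def by blast
  have zdef: "sorted_list_of_set (B1 L G) ! pos (B0 L G) y = z"
    using i1(3) unfolding incr_bij_def pos_def by simp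
  define p where "p = pos (B0 L G) y"
  have pm: "p < m L" unfolding p_def using pos_range[OF decB(1)[OF GL]] yB by simp
  have "pos (B1 L G) z = p"
    using pos_sorted[OF finB(2)[OF GL], of p] pm level_card[OF decB(2)[OF GL]] zdef unfolding p_def by simp
  then have pz: "pos G z = p + (m L - r (Suc L))" and rp: "r (Suc L) \<le> p"
    using pos_B1N[OF GL zB] by auto
  have py: "pos G y = p" unfolding p_def using pos_B0[OF GL] yB by simp
  have rl: "r (Suc L) < m L" by (rule r_lt)
  have l1: "low L p = p" unfolding low_def using pm by simp
  have l2: "low L (p + (m L - r (Suc L))) = p" unfolding low_def using rp rl by simp
  have kL: "k \<le> L" using C(3) L by simp
  define d where "d = m L - r (Suc L)"
  have lt: "p < p + d" using rl unfolding d_def by simp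
  have l2': "low L (p + d) = p" using l2 unfolding d_def .
  have "Rc (Suc L) k p (p + d)"
    unfolding Rc.simps using l1 l2' kL lt Rc_refl[of L k p] by simp
  then have "Rc (Suc L) k p (p + (m L - r (Suc L)))" unfolding d_def .
  then have R: "Rc (Suc L) k (pos G y) (pos G z)" unfolding py pz .
  have "y \<in> G" "z \<in> G" using B_sub[OF GL] yB zB by auto
  then have "rel k y z" using rel_iff[OF GL] R by blast
  then show ?thesis using y z yz by blast
qed

end

definition rr :: "nat \<Rightarrow> nat" where "rr k = (case k of 0 \<Rightarrow> 0 | Suc j \<Rightarrow> fst (prod_decode j))"

fun mm :: "nat \<Rightarrow> nat" where
  "mm 0 = 1"
| "mm (Suc k) = 2 * mm k - rr (Suc k)"

lemma rr_le: "rr (Suc k) \<le> k"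
proof -
  obtain a b where ab: "prod_decode k = (a, b)" by (cases "prod_decode k")
  have "prod_encode (a, b) = k" using prod_decode_inverse[of k] ab by simp
  then have "a \<le> k" using le_prod_encode_1[of a b] by simp
  then show ?thesis unfolding rr_def using ab by simp
qed

lemma mm_ge: "Suc k \<le> mm k"
proof (induction k)
  case 0 then show ?case by simp
next
  case (Suc k)
  then show ?case using rr_le[of k] by simp
qed

lemma mm_type: "is_type mm (\<lambda>_. 2) rr"
  unfolding is_type_def
proof (intro conjI allI impI)
  show "mm 0 = 1" by simp
  fix k :: nat
  show "2 \<le> (2::nat)" by simp
  show "rr (Suc k) < mm k" using rr_le[of k] mm_ge[of k] by simp
  show "mm (Suc k) = rr (Suc k) + (mm k - rr (Suc k)) * 2" using rr_le[of k] mm_ge[of k] by simp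
next
  fix x :: nat
  have "range (\<lambda>b. Suc (prod_encode (x, b))) \<subseteq> {k. k \<ge> 1 \<and> rr k = x}"
    unfolding rr_def by auto
  moreover have "infinite (range (\<lambda>b. Suc (prod_encode (x, b))))"
    by (rule range_inj_infinite) (auto simp: inj_def dest: inj_prod_encode[THEN injD])
  ultimately show "infinite {k. k \<ge> 1 \<and> rr k = x}" using infinite_super by blast
qed

theorem mainTheorem15:
  assumes "omega1_type TYPE('a::wellorder)"
    and "CA TYPE('a) 2"
  shows "\<exists>X :: 'a topology. first_countable X \<and> t1_space X \<and> regular_space X \<and>
           hereditarily separable_space X \<and> \<not> Lindelof_space X"
proof -
  have ty: "is_type mm (\<lambda>_. 2) rr" by (rule mm_type)
  have "\<exists>F :: 'a set set. construction_scheme UNIV mm (\<lambda>_. 2) rr F \<and> n_capturing 2 (\<lambda>_. 2) rr F"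
    using assms(2)[unfolded CA_def, rule_format, of mm "\<lambda>_. 2" rr] ty by simp
  then obtain F :: "'a set set" where F: "construction_scheme UNIV mm (\<lambda>_. 2) rr F" "n_capturing 2 (\<lambda>_. 2) rr F"
    by blast
  interpret c: cscheme F mm rr using ty F(1) by unfold_locales
  interpret nb: nbhd c.rel
    apply unfold_locales
           apply (rule c.Q1)
          apply (erule c.Q2)
         apply (erule c.Q3)
        apply (erule c.Q4)
       apply (erule c.Q5)
      apply (erule c.Q6)
     apply (erule c.Q7[OF F(2)])
    apply (rule assms(1))
    done
  show ?thesis by (rule nb.main)
qed

end
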